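(* Identify the tangent space of $\mathbb OP^2$ at $P_0=[1,0,0]$ with $\mathbb O^2$ via the chart $[1,u,v]\mapsto(u,v)$, a pair $(a,b)$ corresponding to the tangent vector with $du=a$, $dv=b$. Then the Riemann curvature tensor of $(\mathbb OP^2,g)$ at $P_0$ is $$\begin{aligned}R\big((a,b),(c,d),(e,f),(g,h)\big)=&\,4\langle a,e\rangle\langle c,g\rangle-4\langle c,e\rangle\langle a,g\rangle+4\langle b,f\rangle\langle d,h\rangle-4\langle d,f\rangle\langle b,h\rangle\\&-\langle e\bar d,g\bar b\rangle+\langle e\bar b,g\bar d\rangle-\langle c\bar f,a\bar h\rangle+\langle a\bar f,c\bar h\rangle-\langle a\bar d-c\bar b,\ g\bar f-e\bar h\rangle.\end{aligned}$$
   Context: Octonions: $\mathbb O=\mathbb H\oplus\mathbb H$ with product $(q_1,q_2)(p_1,p_2)=(q_1p_1-\bar p_2q_2,\ p_2q_1+q_2\bar p_1)$, conjugation $\overline{(q_1,q_2)}=(\bar q_1,-q_2)$, $\langle a,b\rangle=\mathrm{Re}(a\bar b)$, $|a|^2=\langle a,a\rangle$. $\mathbb OP^2=\mathcal U/_\sim$ with $\mathcal U=(\{1\}\times\mathbb O^2)\cup(\mathbb O\times\{1\}\times\mathbb O)\cup(\mathbb O^2\times\{1\})$ and $[a,b,c]\sim[d,e,f]$ iff $(a,b,c)=(d\lambda,e\lambda,f\lambda)$ for some $\lambda\ne0$; charts $[1,u,v]\mapsto(u,v)$, $[u,1,v]\mapsto(u,v)$, $[u,v,1]\mapsto(u,v)$,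 and metric $g$ given on each chart, for tangent vector $(du,dv)=(\xi,\eta)$, by $ds^2=\frac{|\xi|^2(1+|v|^2)+|\eta|^2(1+|u|^2)-2\mathrm{Re}[(u\bar v)(\eta\bar\xi)]}{(1+|u|^2+|v|^2)^2}$. Curvature sign convention: in coordinates in which the first derivatives of the metric vanish at the point, $R_{\alpha\beta\gamma\delta}=\tfrac12\big[\partial_\alpha\partial_\delta g_{\beta\gamma}+\partial_\beta\partial_\gamma g_{\alpha\delta}-\partial_\beta\partial_\delta g_{\alpha\gamma}-\partial_\alpha\partial_\gamma g_{\beta\delta}\big]$ (so the sectional curvature of an orthonormal pair $x,y$ is $R(x,y,x,y)$). *)

theory Defs
  imports "HOL-Analysis.Analysis"
begin

text \<open>Quaternions as real 4-tuples (a,b,c,d) = a + b i + c j + d k;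
  octonions as pairs of quaternions (Cayley--Dickson), with the product of the paper.\<close>

type_synonym quat = "real \<times> real \<times> real \<times> real"
type_synonym oct = "quat \<times> quat"

fun qmult :: "quat \<Rightarrow> quat \<Rightarrow> quat" where
  "qmult (a1, b1, c1, d1) (a2, b2, c2, d2) =
     (a1*a2 - b1*b2 - c1*c2 - d1*d2,
      a1*b2 + b1*a2 + c1*d2 - d1*c2,
      a1*c2 - b1*d2 + c1*a2 + d1*b2,
      a1*d2 + b1*c2 - c1*b2 + d1*a2)"

fun qcnj :: "quat \<Rightarrow> quat" where
  "qcnj (a, b, c, d) = (a, -b, -c, -d)"

fun omult :: "oct \<Rightarrow> oct \<Rightarrow> oct" where
  "omult (q1, q2) (p1, p2) =
     (qmult q1 p1 - qmult (qcnj p2) q2, qmult p2 q1 + qmult q2 (qcnj p1))"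

fun ocnj :: "oct \<Rightarrow> oct" where
  "ocnj (q1, q2) = (qcnj q1, - q2)"

definition oRe :: "oct \<Rightarrow> real" where
  "oRe x = fst (fst x)"

definition oinner :: "oct \<Rightarrow> oct \<Rightarrow> real" where
  "oinner a b = oRe (omult a (ocnj b))"

definition onorm2 :: "oct \<Rightarrow> real" where
  "onorm2 a = oinner a a"

text \<open>The line element of the metric in the chart [1,u,v] \<mapsto> (u,v), at the point (u,v),
  evaluated on the tangent vector (du,dv) = (\<xi>,\<eta>).\<close>
definition ds2 :: "oct \<times> oct \<Rightarrow> oct \<times> oct \<Rightarrow> real" where
  "ds2 p X = (let u = fst p; v = snd p; \<xi> = fst X; \<eta> = snd X in
     (onorm2 \<xi> * (1 + onorm2 v) + onorm2 \<eta> * (1 + onorm2 u)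
       - 2 * oRe (omult (omult u (ocnj v)) (omult \<eta> (ocnj \<xi>))))
     / (1 + onorm2 u + onorm2 v)^2)"

definition gmet :: "oct \<times> oct \<Rightarrow> oct \<times> oct \<Rightarrow> oct \<times> oct \<Rightarrow> real" where
  "gmet p X Y = (ds2 p (X + Y) - ds2 p (X - Y)) / 4"

definition D2 :: "(oct \<times> oct \<Rightarrow> real) \<Rightarrow> oct \<times> oct \<Rightarrow> oct \<times> oct \<Rightarrow> oct \<times> oct \<Rightarrow> real" where
  "D2 f p X W = deriv (\<lambda>s. deriv (\<lambda>t. f (p + s *\<^sub>R X + t *\<^sub>R W)) 0) 0"

text \<open>Curvature by the paper's convention, valid in coordinates where the first derivatives
  of the metric vanish at p:
  R_{\<alpha>\<beta>\<gamma>\<delta>} = 1/2 [\<partial>_\<alpha>\<partial>_\<delta> g_{\<beta>\<gamma>} + \<partial>_\<beta>\<partial>_\<gamma> g_{\<alpha>\<delta>} - \<partial>_\<beta>\<partial>_\<delta> g_{\<alpha>\<gamma>} - \<partial>_\<alpha>\<partial>_\<gamma> g_{\<beta>\<delta>}].\<close>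
definition Rcurv :: "oct \<times> oct \<Rightarrow> oct \<times> oct \<Rightarrow> oct \<times> oct \<Rightarrow> oct \<times> oct \<Rightarrow> oct \<times> oct \<Rightarrow> real" where
  "Rcurv p X Y Z W = (1/2) *
     (D2 (\<lambda>q. gmet q Y Z) p X W + D2 (\<lambda>q. gmet q X W) p Y Z
      - D2 (\<lambda>q. gmet q X Z) p Y W - D2 (\<lambda>q. gmet q Y W) p X Z)"

end

theory Submission
  imports Defs
begin


lemma oct_exhaust: "(\<And>a0 a1 a2 a3 a4 a5 a6 a7. x = ((a0,a1,a2,a3),(a4,a5,a6,a7)) \<Longrightarrow> P) \<Longrightarrow> P"
  by (metis prod.exhaust)

lemma omult_add_left: "omult (x + y) z = omult x z + omult y z"
  by (cases x rule: oct_exhaust; cases y rule: oct_exhaust; cases z rule: oct_exhaust) (simp add: algebra_simps)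
lemma omult_add_right: "omult z (x + y) = omult z x + omult z y"
  by (cases x rule: oct_exhaust; cases y rule: oct_exhaust; cases z rule: oct_exhaust) (simp add: algebra_simps)
lemma omult_diff_left: "omult (x - y) z = omult x z - omult y z"
  by (cases x rule: oct_exhaust; cases y rule: oct_exhaust; cases z rule: oct_exhaust) (simp add: algebra_simps)
lemma omult_diff_right: "omult z (x - y) = omult z x - omult z y"
  by (cases x rule: oct_exhaust; cases y rule: oct_exhaust; cases z rule: oct_exhaust) (simp add: algebra_simps)
lemma omult_scaleR_left: "omult (r *\<^sub>R x) z = r *\<^sub>R omult x z"
  by (cases x rule: oct_exhaust; cases z rule: oct_exhaust) (simp add: algebra_simps)
lemma omult_scaleR_right: "omult z (r *\<^sub>R x) = r *\<^sub>R omult z x"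
  by (cases x rule: oct_exhaust; cases z rule: oct_exhaust) (simp add: algebra_simps)
lemma ocnj_add: "ocnj (x + y) = ocnj x + ocnj y"
  by (cases x rule: oct_exhaust; cases y rule: oct_exhaust) simp
lemma ocnj_diff: "ocnj (x - y) = ocnj x - ocnj y"
  by (cases x rule: oct_exhaust; cases y rule: oct_exhaust) simp
lemma ocnj_scaleR: "ocnj (r *\<^sub>R x) = r *\<^sub>R ocnj x"
  by (cases x rule: oct_exhaust) simp
lemma ocnj_ocnj: "ocnj (ocnj x) = x"
  by (cases x rule: oct_exhaust) simp
lemma oRe_add: "oRe (x + y) = oRe x + oRe y"
  by (simp add: oRe_def)
lemma oRe_diff: "oRe (x - y) = oRe x - oRe y"
  by (simp add: oRe_def)
lemma oRe_scaleR: "oRe (r *\<^sub>R x) = r * oRe x"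
  by (simp add: oRe_def)
lemma oRe_ocnj: "oRe (ocnj x) = oRe x"
  by (cases x rule: oct_exhaust) (simp add: oRe_def)
lemma ocnj_omult: "ocnj (omult x y) = omult (ocnj y) (ocnj x)"
  by (cases x rule: oct_exhaust; cases y rule: oct_exhaust) (simp add: algebra_simps)
lemma oRe_comm: "oRe (omult x y) = oRe (omult y x)"
  by (cases x rule: oct_exhaust; cases y rule: oct_exhaust) (simp add: oRe_def algebra_simps)
lemma oinner_sym: "oinner x y = oinner y x"
  by (cases x rule: oct_exhaust; cases y rule: oct_exhaust) (simp add: oinner_def oRe_def algebra_simps)



lemma oRe_assoc: "oRe (omult (omult x y) z) = oRe (omult x (omult y z))"
  by (cases x rule: oct_exhaust; cases y rule: oct_exhaust; cases z rule: oct_exhaust) (simp add: oRe_def algebra_simps)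
lemma alt_lin: "omult (omult p (ocnj q)) r + omult (omult p (ocnj r)) q = (2 * oinner q r) *\<^sub>R p"
  by (cases p rule: oct_exhaust; cases q rule: oct_exhaust; cases r rule: oct_exhaust) (simp add: oinner_def oRe_def algebra_simps)



lemma inner_der:
  fixes a b c e f k :: real
  assumes "e \<noteq> 0"
  shows "deriv (\<lambda>t. (a + b*t + c*t^2) / (e + f*t + k*t^2)^2) 0 = b / e^2 - 2*a*f/e^3"
proof -
  have "((\<lambda>t. (a + b*t + c*t^2) / (e + f*t + k*t^2)^2) has_real_derivative
     ((b + c*(2*0)) * (e + f*0 + k*0^2)^2 - (a + b*0 + c*0^2) * (2*(e + f*0 + k*0^2) * (f + k*(2*0)))) / ((e + f*0 + k*0^2)^2)^2) (at 0)"
    using assms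
    by (auto intro!: derivative_eq_intros)
  then have "deriv (\<lambda>t. (a + b*t + c*t^2) / (e + f*t + k*t^2)^2) 0 =
     ((b + c*(2*0)) * (e + f*0 + k*0^2)^2 - (a + b*0 + c*0^2) * (2*(e + f*0 + k*0^2) * (f + k*(2*0)))) / ((e + f*0 + k*0^2)^2)^2"
    by (rule DERIV_imp_deriv)
  also have "\<dots> = b / e^2 - 2*a*f/e^3" using assms by (simp add: field_simps power2_eq_square power3_eq_cube)
  finally show ?thesis .
qed

lemma key_der:
  fixes A n11 n12 n22 d11 d12 d22 :: real
  assumes "d11 \<ge> 0"
  shows "deriv (\<lambda>s. deriv (\<lambda>t. (A + s^2*n11 + 2 * s * t * n12 + t^2*n22)/(1 + s^2*d11 + 2 * s * t * d12 + t^2*d22)^2) 0) 0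
     = 2*n12 - 4*A*d12"
proof -
  have pos: "1 + s^2*d11 > 0" for s :: real using assms by (simp add: add_pos_nonneg)
  have eq: "deriv (\<lambda>t. (A + s^2*n11 + 2 * s * t * n12 + t^2*n22)/(1 + s^2*d11 + 2 * s * t * d12 + t^2*d22)^2) 0
     = (2 * s * n12) / (1 + s^2*d11)^2 - 2*(A + s^2*n11)*(2 * s * d12)/(1 + s^2*d11)^3" for s :: real
  proof -
    have "(\<lambda>t. (A + s^2*n11 + 2 * s * t * n12 + t^2*n22)/(1 + s^2*d11 + 2 * s * t * d12 + t^2*d22)^2)
      = (\<lambda>t. ((A + s^2*n11) + (2 * s * n12)*t + n22*t^2) / ((1 + s^2*d11) + (2 * s * d12)*t + d22*t^2)^2)"
      by (simp add: algebra_simps)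
    then show ?thesis using inner_der[of "1 + s^2*d11" "A + s^2*n11" "2 * s * n12" n22 "2 * s * d12" d22] pos[of s]
      by simp
  qed
  have "((\<lambda>s. (2 * s * n12) / (1 + s^2*d11)^2 - 2*(A + s^2*n11)*(2 * s * d12)/(1 + s^2*d11)^3) has_real_derivative
      2*n12 - 4*A*d12) (at 0)"
    using pos by (auto intro!: derivative_eq_intros simp: field_simps)
  then show ?thesis unfolding eq by (rule DERIV_imp_deriv)
qed




lemma oinner_add_left: "oinner (x + y) z = oinner x z + oinner y z"
  by (simp add: oinner_def omult_add_left oRe_add)
lemma oinner_add_right: "oinner z (x + y) = oinner z x + oinner z y"
  by (simp add: oinner_def omult_add_right ocnj_add oRe_add)
lemma oinner_diff_left: "oinner (x - y) z = oinner x z - oinner y z"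
  by (simp add: oinner_def omult_diff_left oRe_diff)
lemma oinner_diff_right: "oinner z (x - y) = oinner z x - oinner z y"
  by (simp add: oinner_def omult_diff_right ocnj_diff oRe_diff)
lemma oinner_scaleR_left: "oinner (r *\<^sub>R x) z = r * oinner x z"
  by (simp add: oinner_def omult_scaleR_left oRe_scaleR)
lemma oinner_scaleR_right: "oinner z (r *\<^sub>R x) = r * oinner z x"
  by (simp add: oinner_def omult_scaleR_right ocnj_scaleR oRe_scaleR)

lemmas bil = omult_add_left omult_add_right omult_diff_left omult_diff_right
  omult_scaleR_left omult_scaleR_right ocnj_add ocnj_diff ocnj_scaleR oRe_add oRe_diff oRe_scaleR
  oinner_add_left oinner_add_right oinner_diff_left oinner_diff_right oinner_scaleR_left oinner_scaleR_right

lemma onorm2_nonneg: "onorm2 x \<ge> 0"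
proof (cases x rule: oct_exhaust)
  case (1 a0 a1 a2 a3 a4 a5 a6 a7)
  have "0 \<le> a0*a0 + a1*a1 + a2*a2 + a3*a3 + a4*a4 + a5*a5 + a6*a6 + a7*a7"
    by (intro add_nonneg_nonneg) simp_all
  then have h2: "- (a4 * a4) - a5 * a5 - a6 * a6 - a7 * a7 \<le> a0 * a0 + a1 * a1 + a2 * a2 + a3 * a3"
    by linarith
  show ?thesis using 1 h2 by (simp add: onorm2_def oinner_def oRe_def)
qed

lemma gmet_closed: "gmet (u, v) Y Z =
  (oinner (fst Y) (fst Z) * (1 + onorm2 v) + oinner (snd Y) (snd Z) * (1 + onorm2 u)
   - oRe (omult (omult u (ocnj v)) (omult (snd Z) (ocnj (fst Y)) + omult (snd Y) (ocnj (fst Z)))))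
  / (1 + onorm2 u + onorm2 v)^2"
proof -
  have s1: "oinner (fst Z) (fst Y) = oinner (fst Y) (fst Z)" "oinner (snd Z) (snd Y) = oinner (snd Y) (snd Z)"
    by (rule oinner_sym)+
  have p: "1 + onorm2 u + onorm2 v > 0" using onorm2_nonneg[of u] onorm2_nonneg[of v] by linarith
  show ?thesis
    using p unfolding gmet_def ds2_def Let_def onorm2_def
    by (simp add: bil s1 field_simps)
qed

lemma onorm2_line: "onorm2 (s *\<^sub>R x + t *\<^sub>R w) = s^2 * onorm2 x + 2 * s * t * oinner x w + t^2 * onorm2 w"
proof -
  have "oinner w x = oinner x w" by (rule oinner_sym)
  then show ?thesis unfolding onorm2_def by (simp add: bil algebra_simps power2_eq_square)
qed

definition TT :: "oct \<Rightarrow> oct \<Rightarrow> oct \<Rightarrow> real" where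
  "TT x y K = oRe (omult (omult x (ocnj y)) K)"

lemma Re_line: "oRe (omult (omult (s *\<^sub>R x1 + t *\<^sub>R w1) (ocnj (s *\<^sub>R x2 + t *\<^sub>R w2))) K)
  = s^2 * TT x1 x2 K + s * t * (TT x1 w2 K + TT w1 x2 K) + t^2 * TT w1 w2 K"
  unfolding TT_def by (simp add: bil algebra_simps power2_eq_square)


lemma D2_gmet: "D2 (\<lambda>q. gmet q Y Z) 0 X W =
   2 * oinner (fst Y) (fst Z) * oinner (snd X) (snd W) + 2 * oinner (snd Y) (snd Z) * oinner (fst X) (fst W)
   - TT (fst X) (snd W) (omult (snd Z) (ocnj (fst Y)) + omult (snd Y) (ocnj (fst Z)))
   - TT (fst W) (snd X) (omult (snd Z) (ocnj (fst Y)) + omult (snd Y) (ocnj (fst Z)))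
   - 4 * (oinner (fst Y) (fst Z) + oinner (snd Y) (snd Z)) * (oinner (fst X) (fst W) + oinner (snd X) (snd W))"
proof -
  define K where "K = omult (snd Z) (ocnj (fst Y)) + omult (snd Y) (ocnj (fst Z))"
  define a1 where "a1 = oinner (fst Y) (fst Z)"
  define a2 where "a2 = oinner (snd Y) (snd Z)"
  obtain x1 x2 where X: "X = (x1, x2)" by (cases X)
  obtain w1 w2 where W: "W = (w1, w2)" by (cases W)
  have pt: "0 + s *\<^sub>R X + t *\<^sub>R W = (s *\<^sub>R x1 + t *\<^sub>R w1, s *\<^sub>R x2 + t *\<^sub>R w2)" for s t
    unfolding X W by simp
  have num: "oinner (fst Y) (fst Z) * (1 + onorm2 (s *\<^sub>R x2 + t *\<^sub>R w2)) + oinner (snd Y) (snd Z) * (1 + onorm2 (s *\<^sub>R x1 + t *\<^sub>R w1))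
   - oRe (omult (omult (s *\<^sub>R x1 + t *\<^sub>R w1) (ocnj (s *\<^sub>R x2 + t *\<^sub>R w2))) (omult (snd Z) (ocnj (fst Y)) + omult (snd Y) (ocnj (fst Z))))
   = ((a1 + a2) + s^2 * (a1 * onorm2 x2 + a2 * onorm2 x1 - TT x1 x2 K)
      + 2 * s * t * (a1 * oinner x2 w2 + a2 * oinner x1 w1 - (TT x1 w2 K + TT w1 x2 K) / 2)
      + t^2 * (a1 * onorm2 w2 + a2 * onorm2 w1 - TT w1 w2 K))" for s t
    unfolding K_def[symmetric] a1_def[symmetric] a2_def[symmetric] onorm2_line Re_line
    by (simp add: algebra_simps)
  have den: "1 + onorm2 (s *\<^sub>R x1 + t *\<^sub>R w1) + onorm2 (s *\<^sub>R x2 + t *\<^sub>R w2)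
     = 1 + s^2 * (onorm2 x1 + onorm2 x2) + 2 * s * t * (oinner x1 w1 + oinner x2 w2)
         + t^2 * (onorm2 w1 + onorm2 w2)" for s t
    unfolding onorm2_line by (simp add: algebra_simps)
  have eq: "gmet (0 + s *\<^sub>R X + t *\<^sub>R W) Y Z =
     ((a1 + a2) + s^2 * (a1 * onorm2 x2 + a2 * onorm2 x1 - TT x1 x2 K)
      + 2 * s * t * (a1 * oinner x2 w2 + a2 * oinner x1 w1 - (TT x1 w2 K + TT w1 x2 K) / 2)
      + t^2 * (a1 * onorm2 w2 + a2 * onorm2 w1 - TT w1 w2 K))
     / (1 + s^2 * (onorm2 x1 + onorm2 x2) + 2 * s * t * (oinner x1 w1 + oinner x2 w2)
         + t^2 * (onorm2 w1 + onorm2 w2))^2" for s t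
    unfolding pt gmet_closed num den ..
  have "D2 (\<lambda>q. gmet q Y Z) 0 X W = 2 * (a1 * oinner x2 w2 + a2 * oinner x1 w1 - (TT x1 w2 K + TT w1 x2 K) / 2)
     - 4 * (a1 + a2) * (oinner x1 w1 + oinner x2 w2)"
    unfolding D2_def eq
    by (rule key_der) (simp add: onorm2_nonneg add_nonneg_nonneg)
  then show ?thesis unfolding X W K_def a1_def a2_def by (simp add: field_simps)
qed




definition FF :: "oct \<Rightarrow> oct \<Rightarrow> oct \<Rightarrow> oct \<Rightarrow> real" where
  "FF p q r s = oRe (omult (omult p (ocnj q)) (omult r (ocnj s)))"

lemma FF_sym1: "FF p q r s = FF r s p q"
  unfolding FF_def by (rule oRe_comm)
lemma FF_sym2: "FF p q r s = FF s r q p"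
  unfolding FF_def by (metis oRe_ocnj ocnj_omult ocnj_ocnj)
lemma FF_alt: "FF p q r s + FF p r q s = 2 * oinner q r * oinner p s"
proof -
  have "FF p q r s + FF p r q s = oRe (omult (omult (omult p (ocnj q)) r + omult (omult p (ocnj r)) q) (ocnj s))"
    unfolding FF_def by (simp add: oRe_assoc omult_add_left oRe_add)
  also have "\<dots> = 2 * oinner q r * oinner p s"
    unfolding alt_lin by (simp add: omult_scaleR_left oRe_scaleR oinner_def)
  finally show ?thesis .
qed

lemma TT_add: "TT x y (K1 + K2) = TT x y K1 + TT x y K2"
  unfolding TT_def by (simp add: omult_add_right oRe_add)
lemma TT_FF: "TT x y (omult z (ocnj w)) = FF x y z w"
  unfolding TT_def FF_def ..
lemma oinner_FF: "oinner (omult p (ocnj q)) (omult r (ocnj s)) = FF p q s r"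
  unfolding oinner_def FF_def by (simp add: ocnj_omult ocnj_ocnj)

lemma curv:
  fixes a b c d e f g h :: oct
  shows "Rcurv 0 (a, b) (c, d) (e, f) (g, h) =
        4 * oinner a e * oinner c g - 4 * oinner c e * oinner a g
      + 4 * oinner b f * oinner d h - 4 * oinner d f * oinner b h
      - oinner (omult e (ocnj d)) (omult g (ocnj b))
      + oinner (omult e (ocnj b)) (omult g (ocnj d))
      - oinner (omult c (ocnj f)) (omult a (ocnj h))
      + oinner (omult a (ocnj f)) (omult c (ocnj h))
      - oinner (omult a (ocnj d) - omult c (ocnj b)) (omult g (ocnj f) - omult e (ocnj h))"
proof -
  have cf0: "FF c b f g = FF b c g f" by (metis FF_sym1 FF_sym2)
  have cf1: "FF c b h e = FF b c e h" by (metis FF_sym1 FF_sym2)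
  have cf2: "FF c f b g = FF b g c f" by (metis FF_sym1 FF_sym2)
  have cf3: "FF c f h a = FF a h f c" by (metis FF_sym1 FF_sym2)
  have cf4: "FF c h b e = FF b e c h" by (metis FF_sym1 FF_sym2)
  have cf5: "FF c h e b = FF b e h c" by (metis FF_sym1 FF_sym2)
  have cf6: "FF c h f a = FF a f h c" by (metis FF_sym1 FF_sym2)
  have cf7: "FF d a e h = FF a d h e" by (metis FF_sym1 FF_sym2)
  have cf8: "FF d a g f = FF a d f g" by (metis FF_sym1 FF_sym2)
  have cf9: "FF d e a h = FF a h d e" by (metis FF_sym1 FF_sym2)
  have cf10: "FF d e g b = FF b g e d" by (metis FF_sym1 FF_sym2)
  have cf11: "FF d g a f = FF a f d g" by (metis FF_sym1 FF_sym2)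
  have cf12: "FF d g e b = FF b e g d" by (metis FF_sym1 FF_sym2)
  have cf13: "FF e b c h = FF b e h c" by (metis FF_sym1 FF_sym2)
  have cf14: "FF e b d g = FF b e g d" by (metis FF_sym1 FF_sym2)
  have cf15: "FF e b h c = FF b e c h" by (metis FF_sym1 FF_sym2)
  have cf16: "FF e d b g = FF b g e d" by (metis FF_sym1 FF_sym2)
  have cf17: "FF e d h a = FF a h d e" by (metis FF_sym1 FF_sym2)
  have cf18: "FF e h b c = FF b c e h" by (metis FF_sym1 FF_sym2)
  have cf19: "FF e h d a = FF a d h e" by (metis FF_sym1 FF_sym2)
  have cf20: "FF f a c h = FF a f h c" by (metis FF_sym1 FF_sym2)
  have cf21: "FF f a g d = FF a f d g" by (metis FF_sym1 FF_sym2)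
  have cf22: "FF f c a h = FF a h f c" by (metis FF_sym1 FF_sym2)
  have cf23: "FF f c g b = FF b g c f" by (metis FF_sym1 FF_sym2)
  have cf24: "FF f g a d = FF a d f g" by (metis FF_sym1 FF_sym2)
  have cf25: "FF f g c b = FF b c g f" by (metis FF_sym1 FF_sym2)
  have cf26: "FF g b d e = FF b g e d" by (metis FF_sym1 FF_sym2)
  have cf27: "FF g b f c = FF b g c f" by (metis FF_sym1 FF_sym2)
  have cf28: "FF g d b e = FF b e g d" by (metis FF_sym1 FF_sym2)
  have cf29: "FF g d f a = FF a f d g" by (metis FF_sym1 FF_sym2)
  have cf30: "FF g f b c = FF b c g f" by (metis FF_sym1 FF_sym2)
  have cf31: "FF g f d a = FF a d f g" by (metis FF_sym1 FF_sym2)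
  have cf32: "FF h a c f = FF a h f c" by (metis FF_sym1 FF_sym2)
  have cf33: "FF h a e d = FF a h d e" by (metis FF_sym1 FF_sym2)
  have cf34: "FF h c a f = FF a f h c" by (metis FF_sym1 FF_sym2)
  have cf35: "FF h c b e = FF b e h c" by (metis FF_sym1 FF_sym2)
  have cf36: "FF h c e b = FF b e c h" by (metis FF_sym1 FF_sym2)
  have cf37: "FF h e a d = FF a d h e" by (metis FF_sym1 FF_sym2)
  have cf38: "FF h e c b = FF b c e h" by (metis FF_sym1 FF_sym2)
  have ci01: "oinner b a = oinner a b" by (rule oinner_sym)
  have ci02: "oinner c a = oinner a c" by (rule oinner_sym)
  have ci03: "oinner d a = oinner a d" by (rule oinner_sym)
  have ci04: "oinner e a = oinner a e" by (rule oinner_sym)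
  have ci05: "oinner f a = oinner a f" by (rule oinner_sym)
  have ci06: "oinner g a = oinner a g" by (rule oinner_sym)
  have ci07: "oinner h a = oinner a h" by (rule oinner_sym)
  have ci12: "oinner c b = oinner b c" by (rule oinner_sym)
  have ci13: "oinner d b = oinner b d" by (rule oinner_sym)
  have ci14: "oinner e b = oinner b e" by (rule oinner_sym)
  have ci15: "oinner f b = oinner b f" by (rule oinner_sym)
  have ci16: "oinner g b = oinner b g" by (rule oinner_sym)
  have ci17: "oinner h b = oinner b h" by (rule oinner_sym)
  have ci23: "oinner d c = oinner c d" by (rule oinner_sym)
  have ci24: "oinner e c = oinner c e" by (rule oinner_sym)
  have ci25: "oinner f c = oinner c f" by (rule oinner_sym)
  have ci26: "oinner g c = oinner c g" by (rule oinner_sym)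
  have ci27: "oinner h c = oinner c h" by (rule oinner_sym)
  have ci34: "oinner e d = oinner d e" by (rule oinner_sym)
  have ci35: "oinner f d = oinner d f" by (rule oinner_sym)
  have ci36: "oinner g d = oinner d g" by (rule oinner_sym)
  have ci37: "oinner h d = oinner d h" by (rule oinner_sym)
  have ci45: "oinner f e = oinner e f" by (rule oinner_sym)
  have ci46: "oinner g e = oinner e g" by (rule oinner_sym)
  have ci47: "oinner h e = oinner e h" by (rule oinner_sym)
  have ci56: "oinner g f = oinner f g" by (rule oinner_sym)
  have ci57: "oinner h f = oinner f h" by (rule oinner_sym)
  have ci67: "oinner h g = oinner g h" by (rule oinner_sym)
  have alts: "FF a h d e + FF a d h e = 2 * oinner h d * oinner a e"
     "FF a f d g + FF a d f g = 2 * oinner f d * oinner a g"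
     "FF b g c f + FF b c g f = 2 * oinner g c * oinner b f"
     "FF b e c h + FF b c e h = 2 * oinner e c * oinner b h"
    by (rule FF_alt)+
  note alts' = alts[simplified cf0 cf1 cf2 cf3 cf4 cf5 cf6 cf7 cf8 cf9 cf10 cf11 cf12 cf13 cf14 cf15 cf16 cf17 cf18 cf19 cf20 cf21 cf22 cf23 cf24 cf25 cf26 cf27 cf28 cf29 cf30 cf31 cf32 cf33 cf34 cf35 cf36 cf37 cf38 ci01 ci02 ci03 ci04 ci05 ci06 ci07 ci12 ci13 ci14 ci15 ci16 ci17 ci23 ci24 ci25 ci26 ci27 ci34 ci35 ci36 ci37 ci45 ci46 ci47 ci56 ci57 ci67]
  show ?thesis
    unfolding Rcurv_def D2_gmet fst_conv snd_conv TT_add TT_FF oinner_diff_left oinner_diff_right oinner_FF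
    apply (simp only: cf0 cf1 cf2 cf3 cf4 cf5 cf6 cf7 cf8 cf9 cf10 cf11 cf12 cf13 cf14 cf15 cf16 cf17 cf18 cf19 cf20 cf21 cf22 cf23 cf24 cf25 cf26 cf27 cf28 cf29 cf30 cf31 cf32 cf33 cf34 cf35 cf36 cf37 cf38 ci01 ci02 ci03 ci04 ci05 ci06 ci07 ci12 ci13 ci14 ci15 ci16 ci17 ci23 ci24 ci25 ci26 ci27 ci34 ci35 ci36 ci37 ci45 ci46 ci47 ci56 ci57 ci67)
    using alts' by (simp add: algebra_simps)
qed




definition qn2 :: "quat \<Rightarrow> real" where
  "qn2 a = fst a * fst a + fst (snd a) * fst (snd a) + fst (snd (snd a)) * fst (snd (snd a)) + snd (snd (snd a)) * snd (snd (snd a))"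
definition qin :: "quat \<Rightarrow> quat \<Rightarrow> real" where
  "qin a b = fst a * fst b + fst (snd a) * fst (snd b) + fst (snd (snd a)) * fst (snd (snd b)) + snd (snd (snd a)) * snd (snd (snd b))"

lemma qn2_mult: "qn2 (qmult a b) = qn2 a * qn2 b"
  by (cases a rule: prod_cases4; cases b rule: prod_cases4) (simp add: qn2_def algebra_simps)
lemma qn2_cnj: "qn2 (qcnj a) = qn2 a"
  by (cases a rule: prod_cases4) (simp add: qn2_def)
lemma qn2_add: "qn2 (a + b) = qn2 a + qn2 b + 2 * qin a b"
  by (cases a rule: prod_cases4; cases b rule: prod_cases4) (simp add: qn2_def qin_def algebra_simps)
lemma qn2_diff: "qn2 (a - b) = qn2 a + qn2 b - 2 * qin a b"
  by (cases a rule: prod_cases4; cases b rule: prod_cases4) (simp add: qn2_def qin_def algebra_simps)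
lemma qin_id: "qin (qmult p2 q1) (qmult q2 (qcnj p1)) = qin (qmult q1 p1) (qmult (qcnj p2) q2)"
  by (cases p1 rule: prod_cases4; cases p2 rule: prod_cases4; cases q1 rule: prod_cases4; cases q2 rule: prod_cases4)
     (simp add: qin_def algebra_simps)
lemma onorm2_q: "onorm2 x = qn2 (fst x) + qn2 (snd x)"
  by (cases x rule: oct_exhaust) (simp add: onorm2_def oinner_def oRe_def qn2_def)

lemma onorm2_omult: "onorm2 (omult x y) = onorm2 x * onorm2 y"
proof -
  obtain q1 q2 where x: "x = (q1, q2)" by (cases x)
  obtain p1 p2 where y: "y = (p1, p2)" by (cases y)
  show ?thesis unfolding x y onorm2_q
    by (simp add: qn2_add qn2_diff qn2_mult qn2_cnj qin_id algebra_simps)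
qed



lemma onorm2_ocnj: "onorm2 (ocnj x) = onorm2 x"
  by (cases x rule: oct_exhaust) (simp add: onorm2_def oinner_def oRe_def)

lemma oinner_bound: "2 * \<bar>oinner x y\<bar> \<le> onorm2 x + onorm2 y"
proof -
  have s: "oinner y x = oinner x y" by (rule oinner_sym)
  have p: "onorm2 (x + y) = onorm2 x + 2 * oinner x y + onorm2 y"
    unfolding onorm2_def by (simp add: bil s)
  have m: "onorm2 (x - y) = onorm2 x - 2 * oinner x y + onorm2 y"
    unfolding onorm2_def by (simp add: bil s)
  show ?thesis using onorm2_nonneg[of "x + y"] onorm2_nonneg[of "x - y"] p m by linarith
qed

lemma norm_oct: "(norm (x::oct))^2 = onorm2 x"
  by (cases x rule: oct_exhaust) (simp add: norm_Pair onorm2_def oinner_def oRe_def power2_eq_square)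

lemma norm_oct2: "(norm (q::oct \<times> oct))^2 = onorm2 (fst q) + onorm2 (snd q)"
  using onorm2_nonneg[of "fst q"] onorm2_nonneg[of "snd q"] by (simp add: norm_prod_def[where x=q] norm_oct)

lemma omult_zero_left: "omult 0 x = 0"
  by (cases x rule: oct_exhaust) (simp add: zero_prod_def)
lemma onorm2_zero: "onorm2 0 = 0"
  by (simp add: onorm2_def oinner_def oRe_def zero_prod_def)

lemma zero_deriv:
  fixes f :: "'a::real_normed_vector \<Rightarrow> real"
  assumes "\<And>q. \<bar>f q - f 0\<bar> \<le> C * (norm q)^2"
  shows "(f has_derivative (\<lambda>_. 0)) (at 0)"
  unfolding has_derivative_at
proof (intro conjI)
  show "bounded_linear (\<lambda>_::'a. 0::real)" by (rule bounded_linear_zero)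
  show "(\<lambda>h. norm (f (0 + h) - f 0 - 0) / norm h) \<midarrow>0\<rightarrow> 0"
  proof (rule Lim_null_comparison)
    show "\<forall>\<^sub>F h in at 0. norm (norm (f (0 + h) - f 0 - 0) / norm h) \<le> \<bar>C\<bar> * norm h"
    proof (rule always_eventually, rule allI)
      fix h :: 'a
      show "norm (norm (f (0 + h) - f 0 - 0) / norm h) \<le> \<bar>C\<bar> * norm h"
      proof (cases "h = 0")
        case True then show ?thesis by simp
      next
        case False
        then have np: "norm h > 0" by simp
        have "\<bar>f h - f 0\<bar> \<le> \<bar>C\<bar> * norm h * norm h"
        proof -
          have "C * (norm h)^2 \<le> \<bar>C\<bar> * (norm h)^2" by (rule mult_right_mono) simp_all
          then show ?thesis using assms[of h] by (simp add: power2_eq_square mult.assoc)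
        qed
        then show ?thesis using np by (simp add: divide_le_eq)
      qed
    qed
    show "((\<lambda>h. \<bar>C\<bar> * norm h) \<longlongrightarrow> 0) (at (0::'a))"
      by (auto intro!: tendsto_eq_intros)
  qed
qed

lemma real_bound:
  fixes A Q B r :: real
  assumes r: "r \<ge> 0" and q: "\<bar>Q\<bar> \<le> B * r"
  shows "\<bar>(A + Q) / (1 + r)^2 - A\<bar> \<le> (B + 2 * \<bar>A\<bar>) * r"
proof -
  have d: "(1 + r)^2 \<ge> 1" using r mult_nonneg_nonneg[OF r r] by (simp add: power2_eq_square algebra_simps)
  have e: "(A + Q) / (1 + r)^2 - A = Q / (1 + r)^2 - A * ((2*r + r^2) / (1 + r)^2)"
  proof -
    have gen: "(A + Q) / D - A = Q / D - A * ((D - 1) / D)" if "D \<noteq> 0" for D :: real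
      using that by (simp add: field_simps)
    have "(1 + r)^2 - 1 = 2*r + r^2" by (simp add: power2_eq_square algebra_simps)
    then show ?thesis using gen[of "(1+r)^2"] d r by simp
  qed
  have e1: "\<bar>Q / (1 + r)^2\<bar> \<le> \<bar>Q\<bar>"
  proof -
    have "\<bar>Q\<bar> / (1 + r)^2 \<le> \<bar>Q\<bar> / 1"
    proof (rule divide_left_mono)
      show "0 < (1 + r)^2 * 1" using d by linarith
    qed (use d in simp_all)
    then show ?thesis using d by (simp add: abs_div)
  qed
  have e2: "(2*r + r^2) / (1 + r)^2 \<le> 2 * r"
  proof -
    have r2: "0 \<le> r * r" and r3: "0 \<le> r * r * r" using r by simp_all
    have "2*r + r^2 \<le> 2 * r * (1 + r)^2"
      using r2 r3 by (simp add: power2_eq_square algebra_simps)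
    moreover have "(1 + r)^2 > 0" using d by linarith
    ultimately show ?thesis by (simp add: pos_divide_le_eq)
  qed
  have e3: "(2*r + r^2) / (1 + r)^2 \<ge> 0" using r by simp
  have "\<bar>A * ((2*r + r^2) / (1 + r)^2)\<bar> \<le> \<bar>A\<bar> * (2 * r)"
  proof -
    define X where "X = (2*r + r^2) / (1 + r)^2"
    have "\<bar>A * X\<bar> = \<bar>A\<bar> * X" using e3 unfolding X_def[symmetric] by (simp add: abs_mult)
    also have "\<dots> \<le> \<bar>A\<bar> * (2 * r)" using e2 unfolding X_def[symmetric] by (rule mult_left_mono) simp
    finally show ?thesis unfolding X_def .
  qed
  have t: "\<bar>Q / (1 + r)^2 - A * ((2*r + r^2) / (1 + r)^2)\<bar> \<le> \<bar>Q / (1 + r)^2\<bar> + \<bar>A * ((2*r + r^2) / (1 + r)^2)\<bar>"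
    by (rule abs_triangle_ineq4)
  have L: "\<And>s x y m n :: real. s \<le> x + y \<Longrightarrow> x \<le> m \<Longrightarrow> y \<le> n \<Longrightarrow> s \<le> m + n"
    by linarith
  have "\<bar>Q / (1 + r)^2 - A * ((2*r + r^2) / (1 + r)^2)\<bar> \<le> B * r + \<bar>A\<bar> * (2 * r)"
    by (rule L[OF t order_trans[OF e1 q] \<open>\<bar>A * ((2*r + r^2) / (1 + r)^2)\<bar> \<le> \<bar>A\<bar> * (2 * r)\<close>])
  also have "\<dots> = (B + 2 * \<bar>A\<bar>) * r" by (simp add: algebra_simps)
  finally show ?thesis unfolding e .
qed

lemma gmet_bound: "\<bar>gmet q Y Z - gmet 0 Y Z\<bar> \<le>
   (\<bar>oinner (fst Y) (fst Z)\<bar> + \<bar>oinner (snd Y) (snd Z)\<bar>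
     + (1 + onorm2 (omult (snd Z) (ocnj (fst Y)) + omult (snd Y) (ocnj (fst Z)))) / 2
     + 2 * \<bar>oinner (fst Y) (fst Z) + oinner (snd Y) (snd Z)\<bar>) * (norm q)^2"
proof -
  obtain u v where q: "q = (u, v)" by (cases q)
  define K where "K = omult (snd Z) (ocnj (fst Y)) + omult (snd Y) (ocnj (fst Z))"
  define a1 where "a1 = oinner (fst Y) (fst Z)"
  define a2 where "a2 = oinner (snd Y) (snd Z)"
  define r where "r = onorm2 u + onorm2 v"
  define Rr where "Rr = oRe (omult (omult u (ocnj v)) K)"
  define Q where "Q = a1 * onorm2 v + a2 * onorm2 u - Rr"
  have nu: "onorm2 u \<ge> 0" and nv: "onorm2 v \<ge> 0" and nK: "onorm2 K \<ge> 0" by (rule onorm2_nonneg)+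
  have r0: "r \<ge> 0" unfolding r_def using nu nv by simp
  have "Rr = oinner u (ocnj (omult (ocnj v) K))"
    unfolding Rr_def oinner_def by (simp add: oRe_assoc ocnj_ocnj)
  then have "2 * \<bar>Rr\<bar> \<le> onorm2 u + onorm2 v * onorm2 K"
    using oinner_bound[of u "ocnj (omult (ocnj v) K)"] by (simp add: onorm2_ocnj onorm2_omult)
  also have "\<dots> \<le> (1 + onorm2 K) * r"
    unfolding r_def using nu nv nK by (simp add: algebra_simps add_increasing2 mult_left_mono)
  finally have bR: "\<bar>Rr\<bar> \<le> (1 + onorm2 K) / 2 * r" by simp
  have b1: "\<bar>a1 * onorm2 v\<bar> \<le> \<bar>a1\<bar> * r" unfolding r_def using nu nv
    by (simp add: abs_mult mult_left_mono)
  have b2: "\<bar>a2 * onorm2 u\<bar> \<le> \<bar>a2\<bar> * r" unfolding r_def using nu nv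
    by (simp add: abs_mult mult_left_mono)
  have bQ: "\<bar>Q\<bar> \<le> (\<bar>a1\<bar> + \<bar>a2\<bar> + (1 + onorm2 K) / 2) * r"
  proof -
    have tri: "\<bar>Q\<bar> \<le> \<bar>a1 * onorm2 v\<bar> + \<bar>a2 * onorm2 u\<bar> + \<bar>Rr\<bar>"
    proof -
      have T: "\<And>x y z :: real. \<bar>x + y - z\<bar> \<le> \<bar>x\<bar> + \<bar>y\<bar> + \<bar>z\<bar>" by linarith
      show ?thesis unfolding Q_def by (rule T)
    qed
    have L: "\<And>qq x y z m n p :: real. qq \<le> x + y + z \<Longrightarrow> x \<le> m \<Longrightarrow> y \<le> n \<Longrightarrow> z \<le> p \<Longrightarrow> qq \<le> m + n + p"
      by linarith
    have "\<bar>Q\<bar> \<le> \<bar>a1\<bar> * r + \<bar>a2\<bar> * r + (1 + onorm2 K) / 2 * r" by (rule L[OF tri b1 b2 bR])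
    also have "\<dots> = (\<bar>a1\<bar> + \<bar>a2\<bar> + (1 + onorm2 K) / 2) * r" by (simp add: algebra_simps)
    finally show ?thesis .
  qed
  have g: "gmet q Y Z = ((a1 + a2) + Q) / (1 + r)^2"
    unfolding q gmet_closed Q_def r_def Rr_def K_def a1_def a2_def by (simp add: algebra_simps)
  have g0: "gmet 0 Y Z = a1 + a2"
  proof -
    have z: "(0::oct \<times> oct) = (0, 0)" by (simp add: zero_prod_def)
    have r0: "oRe 0 = 0" by (simp add: oRe_def)
    show ?thesis unfolding z gmet_closed by (simp add: onorm2_zero omult_zero_left r0 a1_def a2_def)
  qed
  have "\<bar>gmet q Y Z - gmet 0 Y Z\<bar> \<le> (\<bar>a1\<bar> + \<bar>a2\<bar> + (1 + onorm2 K) / 2 + 2 * \<bar>a1 + a2\<bar>) * r"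
    unfolding g g0 by (rule real_bound[OF r0 bQ])
  moreover have "r = (norm q)^2" unfolding r_def q norm_oct2 by simp
  ultimately show ?thesis unfolding K_def a1_def a2_def by simp
qed

lemma first_deriv: "((\<lambda>q. gmet q Y Z) has_derivative (\<lambda>_. 0)) (at 0)"
  by (rule zero_deriv[OF gmet_bound])


theorem corollary5p4:
  fixes a b c d e f g h :: oct
  shows "(\<forall>Y Z. ((\<lambda>q. gmet q Y Z) has_derivative (\<lambda>_. 0)) (at 0))
    \<and> Rcurv 0 (a, b) (c, d) (e, f) (g, h) =
        4 * oinner a e * oinner c g - 4 * oinner c e * oinner a g
      + 4 * oinner b f * oinner d h - 4 * oinner d f * oinner b h
      - oinner (omult e (ocnj d)) (omult g (ocnj b))
      + oinner (omult e (ocnj b)) (omult g (ocnj d))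
      - oinner (omult c (ocnj f)) (omult a (ocnj h))
      + oinner (omult a (ocnj f)) (omult c (ocnj h))
      - oinner (omult a (ocnj d) - omult c (ocnj b)) (omult g (ocnj f) - omult e (ocnj h))"
  using first_deriv curv by blast

end
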